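(* Let $\mathbb{K}\in\{\mathbb{R},\mathbb{C}\}$, let $\mathbf{R}_U\in\mathbb{K}^{n\times n}$ be self-adjoint positive definite, and equip $U:=\mathbb{K}^n$ with $\langle \mathbf{x},\mathbf{y}\rangle_U:=\langle \mathbf{R}_U\mathbf{x},\mathbf{y}\rangle$. Fix $\mu$, $\mathbf{A}(\mu)\in\mathbb{K}^{n\times n}$, $\mathbf{u}(\mu)\in U$, and a subspace $U_r\subseteq U$ of dimension $r$ with a basis matrix $\mathbf{U}_r\in\mathbb{K}^{n\times r}$ (columns forming a basis of $U_r$). Define $\|\mathbf{y}\|_{U_r'}:=\max_{\mathbf{w}\in U_r\setminus\{\mathbf{0}\}}|\langle\mathbf{y},\mathbf{w}\rangle|/\|\mathbf{w}\|_U$, $\alpha_r(\mu):=\min_{\mathbf{x}\in U_r\setminus\{\mathbf{0}\}}\|\mathbf{A}(\mu)\mathbf{x}\|_{U_r'}/\|\mathbf{x}\|_U$ and $\beta_r(\mu):=\max_{\mathbf{x}\in(\mathrm{span}\{\mathbf{u}(\mu)\}+U_r)\setminus\{\mathbf{0}\}}\|\mathbf{A}(\mu)\mathbf{x}\|_{U_r'}/\|\mathbf{x}\|_U$. If the columns of $\mathbf{U}_r$ are orthonormal with respect to $\langle\cdot,\cdot\rangle_U$, then the condition number of $\mathbf{A}_r(\mu):=\mathbf{U}_r^{\mathrm{H}}\mathbf{A}(\mu)\mathbf{U}_r\in\mathbb{K}^{r\times r}$ is bounded by $\beta_r(\mu)/\alpha_r(\mu)$.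
   Context: $\langle\mathbf{x},\mathbf{y}\rangle=\mathbf{x}^{\mathrm{H}}\mathbf{y}$ is the canonical inner product; $\|\cdot\|_U$ is the norm induced by $\langle\cdot,\cdot\rangle_U$. The condition number of a square matrix is the ratio of its largest to smallest singular value (with respect to the Euclidean norm). *)

theory Defs
  imports "HOL-Analysis.Analysis"
begin

text \<open>Everything is parametrised by the field conjugation cj of the scalar field K:
  cj = cnj for K = complex, cj = id for K = real.\<close>

definition hinner :: "('k::real_normed_field \<Rightarrow> 'k) \<Rightarrow> 'k^'n \<Rightarrow> 'k^'n \<Rightarrow> 'k" where
  "hinner cj x y = (\<Sum>i\<in>UNIV. cj (x$i) * y$i)"

definition hadj :: "('k::real_normed_field \<Rightarrow> 'k) \<Rightarrow> 'k^'c^'r \<Rightarrow> 'k^'r^'c" where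
  "hadj cj M = (\<chi> i j. cj (M$j$i))"

definition self_adjoint_pd :: "('k::real_normed_field \<Rightarrow> 'k) \<Rightarrow> 'k^'n^'n \<Rightarrow> bool" where
  "self_adjoint_pd cj R \<longleftrightarrow> hadj cj R = R \<and>
     (\<forall>x. x \<noteq> 0 \<longrightarrow> (\<exists>t::real. t > 0 \<and> hinner cj (R *v x) x = of_real t))"

definition innerU :: "('k::real_normed_field \<Rightarrow> 'k) \<Rightarrow> 'k^'n^'n \<Rightarrow> 'k^'n \<Rightarrow> 'k^'n \<Rightarrow> 'k" where
  "innerU cj R x y = hinner cj (R *v x) y"

definition normU :: "('k::real_normed_field \<Rightarrow> 'k) \<Rightarrow> 'k^'n^'n \<Rightarrow> 'k^'n \<Rightarrow> real" where
  "normU cj R x = sqrt (norm (innerU cj R x x))"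

definition col_space :: "'k::real_normed_field^'r^'n \<Rightarrow> ('k^'n) set" where
  "col_space Ur = range (\<lambda>c. Ur *v c)"

definition dual_norm :: "('k::real_normed_field \<Rightarrow> 'k) \<Rightarrow> 'k^'n^'n \<Rightarrow> 'k^'r^'n \<Rightarrow> 'k^'n \<Rightarrow> real" where
  "dual_norm cj R Ur y =
     Sup {norm (hinner cj y w) / normU cj R w | w. w \<in> col_space Ur \<and> w \<noteq> 0}"

definition alpha_r :: "('k::real_normed_field \<Rightarrow> 'k) \<Rightarrow> 'k^'n^'n \<Rightarrow> 'k^'r^'n \<Rightarrow> 'k^'n^'n \<Rightarrow> real" where
  "alpha_r cj R Ur A =
     Inf {dual_norm cj R Ur (A *v x) / normU cj R x | x. x \<in> col_space Ur \<and> x \<noteq> 0}"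

definition beta_r :: "('k::real_normed_field \<Rightarrow> 'k) \<Rightarrow> 'k^'n^'n \<Rightarrow> 'k^'r^'n \<Rightarrow> 'k^'n^'n \<Rightarrow> 'k^'n \<Rightarrow> real" where
  "beta_r cj R Ur A u =
     Sup {dual_norm cj R Ur (A *v x) / normU cj R x | x.
            x \<in> {t *s u + w | t w. w \<in> col_space Ur} \<and> x \<noteq> 0}"

text \<open>Largest / smallest singular value of a square matrix (Euclidean norm on vectors;
  the norm of type 'k^'r is the Euclidean norm), and the condition number.\<close>
definition sigma_max :: "'k::real_normed_field^'r^'r \<Rightarrow> real" where
  "sigma_max M = Sup {norm (M *v x) / norm x | x. x \<noteq> 0}"

definition sigma_min :: "'k::real_normed_field^'r^'r \<Rightarrow> real" where
  "sigma_min M = Inf {norm (M *v x) / norm x | x. x \<noteq> 0}"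

definition cond_number :: "'k::real_normed_field^'r^'r \<Rightarrow> real" where
  "cond_number M = sigma_max M / sigma_min M"

end

theory Submission
  imports Defs
begin

locale conjug =
  fixes cj :: "'k::{real_normed_field,euclidean_space} \<Rightarrow> 'k"
  assumes cj_add: "cj (a + b) = cj a + cj b"
    and cj_mult: "cj (a * b) = cj a * cj b"
    and cj_cj: "cj (cj a) = a"
    and cj_norm: "norm (cj a) = norm a"
    and cj_self: "cj a * a = of_real (norm a ^ 2)"
    and cj_of_real: "cj (of_real r) = of_real r"
    and cj_cont: "continuous_on UNIV cj"
begin

lemma cj_zero[simp]: "cj 0 = 0"
  using cj_add[of 0 0] by simp

lemma cj_sum: "cj (sum f S) = sum (\<lambda>i. cj (f i)) S"
  by (induction S rule: infinite_finite_induct) (auto simp: cj_add)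

lemma hinner_self: "hinner cj x x = of_real (norm x ^ 2)"
proof -
  have "hinner cj x x = (\<Sum>i\<in>UNIV. of_real (norm (x$i) ^ 2))"
    unfolding hinner_def using cj_self by simp
  also have "\<dots> = of_real (\<Sum>i\<in>UNIV. norm (x$i) ^ 2)" by simp
  also have "(\<Sum>i\<in>UNIV. norm (x$i) ^ 2) = norm x ^ 2"
    unfolding norm_vec_def L2_set_def by (simp add: sum_nonneg)
  finally show ?thesis .
qed

lemma hinner_cs: "norm (hinner cj a b) \<le> norm a * norm b"
proof -
  have "norm (hinner cj a b) \<le> (\<Sum>i\<in>UNIV. norm (a$i) * norm (b$i))"
    unfolding hinner_def
    by (rule order_trans[OF norm_sum]) (simp add: norm_mult cj_norm)
  also have "\<dots> = (\<chi> i. norm (a$i)) \<bullet> (\<chi> i. norm (b$i))"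
    by (simp add: inner_vec_def)
  also have "\<dots> \<le> norm (\<chi> i. norm (a$i)) * norm (\<chi> i. norm (b$i))"
    by (rule norm_cauchy_schwarz)
  also have "norm (\<chi> i. norm (a$i)) = norm a" by (simp add: norm_vec_def)
  also have "norm (\<chi> i. norm (b$i)) = norm b" by (simp add: norm_vec_def)
  finally show ?thesis .
qed

lemma innerU_add1: "innerU cj R (x + y) z = innerU cj R x z + innerU cj R y z"
  by (simp add: innerU_def hinner_def matrix_vector_right_distrib cj_add distrib_right sum.distrib)

lemma innerU_add2: "innerU cj R z (x + y) = innerU cj R z x + innerU cj R z y"
  by (simp add: innerU_def hinner_def distrib_left sum.distrib)

lemma innerU_smult1: "innerU cj R (a *s x) z = cj a * innerU cj R x z"
proof -
  have "R *v (a *s x) = a *s (R *v x)"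
    by (simp add: vec_eq_iff matrix_vector_mult_def sum_distrib_left mult_ac)
  then show ?thesis
    by (simp add: innerU_def hinner_def cj_mult sum_distrib_left mult_ac)
qed

lemma innerU_smult2: "innerU cj R z (a *s x) = a * innerU cj R z x"
  by (simp add: innerU_def hinner_def sum_distrib_left algebra_simps)


lemma innerU_zero1[simp]: "innerU cj R 0 z = 0"
  by (simp add: innerU_def hinner_def)

lemma innerU_zero2[simp]: "innerU cj R z 0 = 0"
  by (simp add: innerU_def hinner_def)

lemma innerU_sum1: "innerU cj R (sum f S) z = (\<Sum>i\<in>S. innerU cj R (f i) z)"
  by (induction S rule: infinite_finite_induct) (simp_all add: innerU_add1)

lemma innerU_sum2: "innerU cj R z (sum f S) = (\<Sum>i\<in>S. innerU cj R z (f i))"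
  by (induction S rule: infinite_finite_induct) (simp_all add: innerU_add2)

lemma innerU_Ur:
  assumes orth: "\<forall>i j. innerU cj R (column i Ur) (column j Ur) = (if i = j then 1 else 0)"
  shows "innerU cj R (Ur *v c) (Ur *v d) = hinner cj c d"
proof -
  have "innerU cj R (Ur *v c) (Ur *v d) =
     (\<Sum>i\<in>UNIV. \<Sum>n\<in>UNIV. d$i * (cj (c$n) * (if n = i then 1 else 0)))"
    unfolding matrix_mult_sum innerU_sum1 innerU_sum2 innerU_smult1 innerU_smult2
    by (simp add: orth sum_distrib_left mult_ac)
  also have "\<dots> = (\<Sum>i\<in>UNIV. d$i * cj (c$i))"
    by (simp add: if_distrib cong: if_cong)
  also have "\<dots> = hinner cj c d"
    by (simp add: hinner_def mult.commute)
  finally show ?thesis .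
qed

lemma normU_Ur:
  assumes orth: "\<forall>i j. innerU cj R (column i Ur) (column j Ur) = (if i = j then 1 else 0)"
  shows "normU cj R (Ur *v c) = norm c"
proof -
  have "norm ((of_real (norm c))^2 :: 'k) = norm c ^ 2" by (simp add: norm_power)
  then show ?thesis unfolding normU_def innerU_Ur[OF orth] hinner_self by simp
qed

lemma hinner_Ur: "hinner cj y (Ur *v c) = hinner cj (hadj cj Ur *v y) c"
proof -
  have "hinner cj y (Ur *v c) = (\<Sum>i\<in>UNIV. \<Sum>j\<in>UNIV. cj (y$i) * (Ur$i$j * c$j))"
    by (simp add: hinner_def matrix_vector_mult_def sum_distrib_left)
  also have "\<dots> = (\<Sum>j\<in>UNIV. \<Sum>i\<in>UNIV. cj (y$i) * (Ur$i$j * c$j))"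
    by (rule sum.swap)
  also have "\<dots> = hinner cj (hadj cj Ur *v y) c"
    by (simp add: hinner_def matrix_vector_mult_def hadj_def cj_sum cj_mult cj_cj
        sum_distrib_right sum_distrib_left mult_ac)
  finally show ?thesis .
qed

lemma sup_ratio: "Sup {norm (hinner cj v c) / norm c | c. c \<noteq> (0::'k^'r)} = norm v"
proof (rule cSup_eq_maximum)
  show "x \<le> norm v" if "x \<in> {norm (hinner cj v c) / norm c | c. c \<noteq> (0::'k^'r)}" for x
    using that hinner_cs[of v] by (auto simp: divide_le_eq)
  show "norm v \<in> {norm (hinner cj v c) / norm c | c. c \<noteq> (0::'k^'r)}"
  proof (cases "v = 0")
    case True
    show ?thesis
      by (rule CollectI, rule exI[of _ 1]) (use True in \<open>simp add: vec_eq_iff hinner_def\<close>)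
  next
    case False
    have "norm (hinner cj v v) / norm v = norm v" using False
      by (simp add: hinner_self norm_mult power2_eq_square)
    then show ?thesis using False by (intro CollectI exI[of _ v]) simp
  qed
qed

lemma dual_norm_eq:
  assumes orth: "\<forall>i j. innerU cj R (column i Ur) (column j Ur) = (if i = j then 1 else 0)"
    and inj: "\<forall>c. Ur *v c = 0 \<longrightarrow> c = 0"
  shows "dual_norm cj R Ur y = norm (hadj cj Ur *v y)"
proof -
  have "{norm (hinner cj y w) / normU cj R w | w. w \<in> col_space Ur \<and> w \<noteq> 0}
      = {norm (hinner cj (hadj cj Ur *v y) c) / norm c | c. c \<noteq> 0}"
  proof (intro equalityI subsetI)
    fix z assume "z \<in> {norm (hinner cj y w) / normU cj R w | w. w \<in> col_space Ur \<and> w \<noteq> 0}"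
    then obtain c where "z = norm (hinner cj y (Ur *v c)) / normU cj R (Ur *v c)" "Ur *v c \<noteq> 0"
      unfolding col_space_def by auto
    moreover then have "c \<noteq> 0" by auto
    ultimately show "z \<in> {norm (hinner cj (hadj cj Ur *v y) c) / norm c | c. c \<noteq> 0}"
      by (auto simp: hinner_Ur normU_Ur[OF orth])
  next
    fix z assume "z \<in> {norm (hinner cj (hadj cj Ur *v y) c) / norm c | c. c \<noteq> 0}"
    then obtain c where "z = norm (hinner cj (hadj cj Ur *v y) c) / norm c" "c \<noteq> 0" by auto
    moreover then have "Ur *v c \<noteq> 0" using inj by auto
    ultimately show "z \<in> {norm (hinner cj y w) / normU cj R w | w. w \<in> col_space Ur \<and> w \<noteq> 0}"
      unfolding col_space_def by (intro CollectI exI[of _ "Ur *v c"]) (auto simp: hinner_Ur normU_Ur[OF orth])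
  qed
  then show ?thesis unfolding dual_norm_def using sup_ratio by simp
qed


lemma scaleR_smult: "(r *\<^sub>R x) = (of_real r :: 'k) *s (x::'k^'n)"
  by (simp add: vec_eq_iff) (simp add: scaleR_conv_of_real)

lemma pd_lower:
  assumes pd: "self_adjoint_pd cj (R::'k^'n^'n)"
  shows "\<exists>m>0. \<forall>x. m * norm x \<le> normU cj R x"
proof -
  let ?g = "\<lambda>x::'k^'n. norm (innerU cj R x x)"
  have cont: "continuous_on UNIV ?g"
    unfolding innerU_def hinner_def matrix_vector_mult_def
    by (intro continuous_intros continuous_on_compose2[OF cj_cont]) auto
  obtain x1 :: "'k^'n" where "norm x1 = 1" using vector_choose_size[of 1] by auto
  then have ne: "sphere (0::'k^'n) 1 \<noteq> {}" by auto
  obtain x0 where x0: "x0 \<in> sphere 0 1" "\<And>y. y \<in> sphere 0 1 \<Longrightarrow> ?g x0 \<le> ?g y"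
    using continuous_attains_inf[OF compact_sphere ne continuous_on_subset[OF cont]] by auto
  have "x0 \<noteq> 0" using x0 by auto
  then obtain t where t: "t > 0" "innerU cj R x0 x0 = of_real t"
    using pd unfolding self_adjoint_pd_def innerU_def by blast
  have g0: "?g x0 > 0" using t by simp
  have "sqrt (?g x0) * norm x \<le> normU cj R x" for x
  proof (cases "x = 0")
    case True then show ?thesis by (simp add: normU_def)
  next
    case False
    define z where "z = inverse (norm x) *\<^sub>R x"
    have z: "z \<in> sphere 0 1" using False by (simp add: z_def)
    have xz: "x = norm x *\<^sub>R z" using False by (simp add: z_def)
    have "innerU cj R x x = of_real (norm x ^ 2) * innerU cj R z z"
      by (subst (1 2) xz) (simp add: scaleR_smult innerU_smult1 innerU_smult2 cj_of_real power2_eq_square)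
    then have "?g x = norm x ^ 2 * ?g z" by (simp add: norm_mult norm_power)
    moreover have "?g x0 \<le> ?g z" using x0(2) z by blast
    ultimately have "norm x ^ 2 * ?g x0 \<le> ?g x" by (simp add: mult_left_mono)
    then have "sqrt (norm x ^ 2 * ?g x0) \<le> sqrt (?g x)" by (rule real_sqrt_le_mono)
    then show ?thesis by (simp add: normU_def real_sqrt_mult mult.commute)
  qed
  then show ?thesis using g0 by (intro exI[of _ "sqrt (?g x0)"]) auto
qed

end

lemma matrix_bound:
  fixes B :: "'k::real_normed_field^'n^'m"
  shows "norm (B *v x) \<le> (\<Sum>i\<in>UNIV. \<Sum>j\<in>UNIV. norm (B$i$j)) * norm x"
proof -
  have "norm (B *v x) \<le> (\<Sum>i\<in>UNIV. norm ((B *v x)$i))"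
    unfolding norm_vec_def by (rule L2_set_le_sum) simp
  also have "\<dots> \<le> (\<Sum>i\<in>UNIV. \<Sum>j\<in>UNIV. norm (B$i$j) * norm x)"
  proof (rule sum_mono)
    fix i
    have "norm ((B *v x)$i) \<le> (\<Sum>j\<in>UNIV. norm (B$i$j * x$j))"
      unfolding matrix_vector_mult_def by (simp add: norm_sum)
    also have "\<dots> \<le> (\<Sum>j\<in>UNIV. norm (B$i$j) * norm x)"
    proof (rule sum_mono)
      fix j
      have "norm (B$i$j * x$j) = norm (B$i$j) * norm (x$j)" by (rule norm_mult)
      also have "\<dots> \<le> norm (B$i$j) * norm x" by (rule mult_left_mono) (simp_all add: Finite_Cartesian_Product.norm_nth_le)
      finally show "norm (B$i$j * x$j) \<le> norm (B$i$j) * norm x" .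
    qed
    finally show "norm ((B *v x)$i) \<le> (\<Sum>j\<in>UNIV. norm (B$i$j) * norm x)" .
  qed
  finally show ?thesis by (simp add: sum_distrib_right)
qed


context conjug begin

theorem main:
  fixes R A :: "'k^'n^'n" and u :: "'k^'n" and Ur :: "'k^'r^'n"
  assumes pd: "self_adjoint_pd cj R"
    and inj: "\<forall>c. Ur *v c = 0 \<longrightarrow> c = 0"
    and orth: "\<forall>i j. innerU cj R (column i Ur) (column j Ur) = (if i = j then 1 else 0)"
  shows "cond_number (hadj cj Ur ** A ** Ur) \<le> beta_r cj R Ur A u / alpha_r cj R Ur A"
proof -
  define B where "B = hadj cj Ur ** A"
  define M where "M = hadj cj Ur ** A ** Ur"
  have E: "dual_norm cj R Ur (A *v x) = norm (B *v x)" for x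
    unfolding dual_norm_eq[OF orth inj] B_def by (simp add: matrix_vector_mul_assoc)
  have Mc: "M *v c = B *v (Ur *v c)" for c
    unfolding M_def B_def by (simp add: matrix_vector_mul_assoc)
  define S where "S = {norm (M *v c) / norm c | c. c \<noteq> (0::'k^'r)}"
  have one: "(1::'k^'r) \<noteq> 0" by (simp add: vec_eq_iff)
  have Sne: "S \<noteq> {}" unfolding S_def using one by blast
  have alpha: "alpha_r cj R Ur A = Inf S"
  proof -
    have "{dual_norm cj R Ur (A *v x) / normU cj R x | x. x \<in> col_space Ur \<and> x \<noteq> 0} = S"
    proof (intro equalityI subsetI)
      fix z assume "z \<in> {dual_norm cj R Ur (A *v x) / normU cj R x | x. x \<in> col_space Ur \<and> x \<noteq> 0}"
      then obtain c where "z = dual_norm cj R Ur (A *v (Ur *v c)) / normU cj R (Ur *v c)" "Ur *v c \<noteq> 0"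
        unfolding col_space_def by auto
      moreover then have "c \<noteq> 0" by auto
      ultimately show "z \<in> S" unfolding S_def
        by (intro CollectI exI[of _ c]) (simp add: E Mc normU_Ur[OF orth])
    next
      fix z assume "z \<in> S"
      then obtain c where "z = norm (M *v c) / norm c" "c \<noteq> 0" unfolding S_def by auto
      moreover then have "Ur *v c \<noteq> 0" using inj by auto
      ultimately show "z \<in> {dual_norm cj R Ur (A *v x) / normU cj R x | x. x \<in> col_space Ur \<and> x \<noteq> 0}"
        unfolding col_space_def by (intro CollectI exI[of _ "Ur *v c"]) (simp add: E Mc normU_Ur[OF orth])
    qed
    then show ?thesis unfolding alpha_r_def by simp
  qed
  have smin: "sigma_min M = Inf S" unfolding sigma_min_def S_def ..
  have smax: "sigma_max M = Sup S" unfolding sigma_max_def S_def ..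
  have alpha_nonneg: "0 \<le> alpha_r cj R Ur A"
    unfolding alpha using Sne by (intro cInf_greatest) (auto simp: S_def)
  define T where "T = {dual_norm cj R Ur (A *v x) / normU cj R x | x.
            x \<in> {t *s u + w | t w. w \<in> col_space Ur} \<and> x \<noteq> 0}"
  obtain m where m: "m > 0" "\<And>x. m * norm x \<le> normU cj R x" using pd_lower[OF pd] by blast
  define K where "K = (\<Sum>i\<in>UNIV. \<Sum>j\<in>UNIV. norm (B$i$j))"
  have K0: "K \<ge> 0" unfolding K_def by (intro sum_nonneg) auto
  have bdd: "bdd_above T"
  proof (rule bdd_aboveI)
    fix z assume "z \<in> T"
    then obtain x where z: "z = norm (B *v x) / normU cj R x" and "x \<noteq> 0" unfolding T_def E by auto
    then have nx: "norm x > 0" by simp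
    have "m * norm x \<le> normU cj R x" by (rule m(2))
    then have pos: "normU cj R x > 0" using m(1) nx by (smt (verit) mult_pos_pos)
    have "norm (B *v x) \<le> K * norm x" unfolding K_def by (rule matrix_bound)
    also have "\<dots> \<le> K * (normU cj R x / m)"
      using m K0 by (intro mult_left_mono) (simp_all add: pos_le_divide_eq mult.commute)
    finally have "norm (B *v x) / normU cj R x \<le> K * (normU cj R x / m) / normU cj R x"
      using pos by (rule divide_right_mono[OF _ less_imp_le])
    also have "\<dots> = K / m" using pos by simp
    finally show "z \<le> K / m" unfolding z .
  qed
  have sle: "Sup S \<le> beta_r cj R Ur A u"
  proof (rule cSup_least[OF Sne])
    fix z assume "z \<in> S"
    then obtain c where zc: "z = norm (M *v c) / norm c" "c \<noteq> 0" unfolding S_def by auto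
    then have h1: "Ur *v c \<noteq> 0" using inj by auto
    have h2: "Ur *v c \<in> {t *s u + w | t w. w \<in> col_space Ur}"
      unfolding col_space_def
      by (rule CollectI, rule exI[of _ 0], rule exI[of _ "Ur *v c"]) simp
    have h3: "z = dual_norm cj R Ur (A *v (Ur *v c)) / normU cj R (Ur *v c)"
      unfolding E normU_Ur[OF orth] Mc[symmetric] by (rule zc(1))
    have "z \<in> T" unfolding T_def
      by (rule CollectI, rule exI[of _ "Ur *v c"]) (intro conjI h1 h2 h3)
    then show "z \<le> beta_r cj R Ur A u" unfolding beta_r_def T_def[symmetric]
      using bdd by (rule cSup_upper)
  qed
  show ?thesis
  proof (cases "alpha_r cj R Ur A = 0")
    case True then show ?thesis unfolding cond_number_def M_def[symmetric] smin alpha[symmetric] by simp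
  next
    case False
    then have "alpha_r cj R Ur A > 0" using alpha_nonneg by simp
    then show ?thesis unfolding cond_number_def M_def[symmetric] smin smax alpha[symmetric]
      by (rule divide_right_mono[OF sle less_imp_le])
  qed
qed

end


interpretation cconj: conjug cnj
proof
  fix a b :: complex and r :: real
  show "cnj (a + b) = cnj a + cnj b" by simp
  show "cnj (a * b) = cnj a * cnj b" by simp
  show "cnj (cnj a) = a" by simp
  show "norm (cnj a) = norm a" by simp
  show "cnj a * a = of_real (norm a ^ 2)" by (metis complex_norm_square mult.commute of_real_power)
  show "cnj (of_real r) = of_real r" by simp
  show "continuous_on UNIV cnj" by (intro continuous_intros)
qed

interpretation rconj: conjug "id :: real \<Rightarrow> real"
proof
  fix a b :: real and r :: real
  show "id (a + b) = id a + id b" by simp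
  show "id (a * b) = id a * id b" by simp
  show "id (id a) = a" by simp
  show "norm (id a) = norm a" by simp
  show "id a * a = of_real (norm a ^ 2)" by (simp add: power2_eq_square)
  show "id (of_real r) = of_real r" by simp
  show "continuous_on UNIV (id :: real \<Rightarrow> real)" by (intro continuous_intros)
qed

theorem proposition2p2:
  shows
  "(\<forall>(R::complex^'n^'n) (A::complex^'n^'n) (u::complex^'n) (Ur::complex^'r^'n).
      self_adjoint_pd cnj R \<longrightarrow>
      (\<forall>c. Ur *v c = 0 \<longrightarrow> c = 0) \<longrightarrow>
      (\<forall>i j. innerU cnj R (column i Ur) (column j Ur) = (if i = j then 1 else 0)) \<longrightarrow>
      cond_number (hadj cnj Ur ** A ** Ur) \<le> beta_r cnj R Ur A u / alpha_r cnj R Ur A)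
 \<and> (\<forall>(R::real^'n^'n) (A::real^'n^'n) (u::real^'n) (Ur::real^'r^'n).
      self_adjoint_pd id R \<longrightarrow>
      (\<forall>c. Ur *v c = 0 \<longrightarrow> c = 0) \<longrightarrow>
      (\<forall>i j. innerU id R (column i Ur) (column j Ur) = (if i = j then 1 else 0)) \<longrightarrow>
      cond_number (hadj id Ur ** A ** Ur) \<le> beta_r id R Ur A u / alpha_r id R Ur A)"
  by (intro conjI allI impI) (erule (2) cconj.main, erule (2) rconj.main)

end
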